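(* Let $T$ be the weighted shift on $\ell^2$ associated to a bounded complex sequence $(a_j)_{j\ge1}$. If both $T$ and its Aluthge transform $\Delta(T)$ are $2$-isometries, then $T$ is an isometry, and in particular $T=\Delta(T)=M(T)$.
   Context: $\ell^2$ has canonical basis $(e_j)_{j\ge1}$; the weighted shift associated to $(a_j)$ is the operator with $Te_j=a_je_{j+1}$. For $T\in B(H)$ with polar decomposition $T=V|T|$ ($|T|=(T^*T)^{1/2}$, $V$ the partial isometry with $\ker V=\ker T$), the Aluthge transform is $\Delta(T)=|T|^{1/2}V|T|^{1/2}$ and the mean transform is $M(T)=\frac12(|T|V+V|T|)$. $T$ is a $2$-isometry if $\|x\|^2-2\|Tx\|^2+\|T^2x\|^2=0$ for all $x\in H$. *)

theory Defs
  imports "HOL-Analysis.Analysis"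
begin

text \<open>Concrete model of the Hilbert space l2 (indexed from 0: e_0, e_1, ...).
  Operators are functions on sequences; only their action on l2 matters.\<close>

definition l2 :: "(nat \<Rightarrow> complex) set" where
  "l2 = {x. summable (\<lambda>j. (cmod (x j))\<^sup>2)}"

definition l2_inner :: "(nat \<Rightarrow> complex) \<Rightarrow> (nat \<Rightarrow> complex) \<Rightarrow> complex" where
  "l2_inner x y = (\<Sum>j. x j * cnj (y j))"

definition l2_norm :: "(nat \<Rightarrow> complex) \<Rightarrow> real" where
  "l2_norm x = sqrt (\<Sum>j. (cmod (x j))\<^sup>2)"

definition bounded_op :: "((nat \<Rightarrow> complex) \<Rightarrow> (nat \<Rightarrow> complex)) \<Rightarrow> bool" where
  "bounded_op A \<longleftrightarrow>
     (\<forall>x\<in>l2. A x \<in> l2) \<and>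
     (\<forall>x\<in>l2. \<forall>y\<in>l2. \<forall>c::complex. A (\<lambda>j. x j + c * y j) = (\<lambda>j. A x j + c * A y j)) \<and>
     (\<exists>C. \<forall>x\<in>l2. l2_norm (A x) \<le> C * l2_norm x)"

definition positive_op :: "((nat \<Rightarrow> complex) \<Rightarrow> (nat \<Rightarrow> complex)) \<Rightarrow> bool" where
  "positive_op A \<longleftrightarrow> bounded_op A \<and>
     (\<forall>x\<in>l2. l2_inner (A x) x \<in> \<real> \<and> 0 \<le> Re (l2_inner (A x) x))"

definition partial_isometry :: "((nat \<Rightarrow> complex) \<Rightarrow> (nat \<Rightarrow> complex)) \<Rightarrow> bool" where
  "partial_isometry V \<longleftrightarrow> bounded_op V \<and>
     (\<forall>x\<in>l2. (\<forall>y\<in>l2. V y = (\<lambda>_. 0) \<longrightarrow> l2_inner x y = 0) \<longrightarrow> l2_norm (V x) = l2_norm x)"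

text \<open>P = |T| = (T^* T)^(1/2): P positive with P^2 = T^* T, i.e. <P P x, y> = <T x, T y>.\<close>
definition is_modulus :: "((nat \<Rightarrow> complex) \<Rightarrow> (nat \<Rightarrow> complex)) \<Rightarrow> ((nat \<Rightarrow> complex) \<Rightarrow> (nat \<Rightarrow> complex)) \<Rightarrow> bool" where
  "is_modulus T P \<longleftrightarrow> positive_op P \<and>
     (\<forall>x\<in>l2. \<forall>y\<in>l2. l2_inner (P (P x)) y = l2_inner (T x) (T y))"

definition is_polar :: "((nat \<Rightarrow> complex) \<Rightarrow> (nat \<Rightarrow> complex)) \<Rightarrow> ((nat \<Rightarrow> complex) \<Rightarrow> (nat \<Rightarrow> complex))
    \<Rightarrow> ((nat \<Rightarrow> complex) \<Rightarrow> (nat \<Rightarrow> complex)) \<Rightarrow> bool" where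
  "is_polar T V P \<longleftrightarrow> is_modulus T P \<and> partial_isometry V \<and>
     (\<forall>x\<in>l2. V x = (\<lambda>_. 0) \<longleftrightarrow> T x = (\<lambda>_. 0)) \<and>
     (\<forall>x\<in>l2. T x = V (P x))"

definition is_pos_sqrt :: "((nat \<Rightarrow> complex) \<Rightarrow> (nat \<Rightarrow> complex)) \<Rightarrow> ((nat \<Rightarrow> complex) \<Rightarrow> (nat \<Rightarrow> complex)) \<Rightarrow> bool" where
  "is_pos_sqrt P Q \<longleftrightarrow> positive_op Q \<and> (\<forall>x\<in>l2. Q (Q x) = P x)"

text \<open>Weighted shift: T e_j = a_j e_(j+1) (0-based indexing).\<close>
definition wshift :: "(nat \<Rightarrow> complex) \<Rightarrow> (nat \<Rightarrow> complex) \<Rightarrow> (nat \<Rightarrow> complex)" where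
  "wshift a x = (\<lambda>j. if j = 0 then 0 else a (j - 1) * x (j - 1))"

definition two_isometry :: "((nat \<Rightarrow> complex) \<Rightarrow> (nat \<Rightarrow> complex)) \<Rightarrow> bool" where
  "two_isometry T \<longleftrightarrow>
     (\<forall>x\<in>l2. (l2_norm x)\<^sup>2 - 2 * (l2_norm (T x))\<^sup>2 + (l2_norm (T (T x)))\<^sup>2 = 0)"

definition isometry_op :: "((nat \<Rightarrow> complex) \<Rightarrow> (nat \<Rightarrow> complex)) \<Rightarrow> bool" where
  "isometry_op T \<longleftrightarrow> (\<forall>x\<in>l2. l2_norm (T x) = l2_norm x)"

end

theory Submission
  imports Defs
begin


definition sv :: "complex \<Rightarrow> nat \<Rightarrow> nat \<Rightarrow> complex" where
  "sv c m = (\<lambda>k. if k = m then c else 0)"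

lemma suminf_single': "(\<Sum>r. if r = i then f else 0) = (f::'a::{t2_space,comm_monoid_add})"
  using sums_single[of i "\<lambda>_. f"] by (rule sums_unique[symmetric])

lemma sv_l2: "sv c m \<in> l2"
proof -
  have "(\<lambda>j. (cmod (sv c m j))\<^sup>2) = (\<lambda>j. if j = m then (cmod c)\<^sup>2 else 0)"
    by (auto simp: sv_def)
  then show ?thesis unfolding l2_def by simp
qed

lemma sv_norm: "l2_norm (sv c m) = cmod c"
proof -
  have "(\<lambda>j. (cmod (sv c m j))\<^sup>2) = (\<lambda>j. if j = m then (cmod c)\<^sup>2 else 0)"
    by (auto simp: sv_def)
  then show ?thesis unfolding l2_norm_def by (simp add: suminf_single')
qed

lemma sv_inner: "l2_inner z (sv c m) = z m * cnj c"
proof -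
  have "(\<lambda>j. z j * cnj (sv c m j)) = (\<lambda>j. if j = m then z m * cnj c else 0)"
    by (auto simp: sv_def)
  then show ?thesis unfolding l2_inner_def by (simp add: suminf_single')
qed

lemma sv_shift: "wshift a (sv c m) = sv (a m * c) (Suc m)"
  by (auto simp: wshift_def sv_def fun_eq_iff)

lemma sv_scale: "sv c m = (\<lambda>k. c * sv 1 m k)"
  by (auto simp: sv_def)

lemma zero_l2: "(\<lambda>_. 0) \<in> l2" by (simp add: l2_def)

lemma bop_lin: assumes "bounded_op A" "x \<in> l2" "y \<in> l2"
  shows "A (\<lambda>j. x j + c * y j) = (\<lambda>j. A x j + c * A y j)"
  using assms unfolding bounded_op_def by blast

lemma bop_l2: assumes "bounded_op A" "x \<in> l2" shows "A x \<in> l2"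
  using assms unfolding bounded_op_def by blast

lemma bop_zero: assumes "bounded_op A" shows "A (\<lambda>_. 0) = (\<lambda>_. 0)"
proof -
  have "A (\<lambda>j. (\<lambda>_. 0) j + 1 * (\<lambda>_. 0) j) = (\<lambda>j. A (\<lambda>_. 0) j + 1 * A (\<lambda>_. 0) j)"
    by (rule bop_lin[OF assms zero_l2 zero_l2])
  then have "A (\<lambda>_. 0) = (\<lambda>j. A (\<lambda>_. 0) j + A (\<lambda>_. 0) j)" by simp
  then show ?thesis by (simp add: fun_eq_iff)
qed

lemma bop_scale: assumes "bounded_op A" "y \<in> l2" shows "A (\<lambda>k. c * y k) = (\<lambda>k. c * A y k)"
proof -
  have "A (\<lambda>j. (\<lambda>_. 0) j + c * y j) = (\<lambda>j. A (\<lambda>_. 0) j + c * A y j)"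
    by (rule bop_lin[OF assms(1) zero_l2 assms(2)])
  then show ?thesis using bop_zero[OF assms(1)] by simp
qed

lemma bop_sv: assumes "bounded_op A" shows "A (sv c m) = (\<lambda>k. c * A (sv 1 m) k)"
proof -
  have "A (\<lambda>k. c * sv 1 m k) = (\<lambda>k. c * A (sv 1 m) k)" by (rule bop_scale[OF assms sv_l2])
  then show ?thesis using sv_scale[of c m] by simp
qed

lemma sq_ineq: "(u+v)^2 \<le> 2*u^2 + 2*(v::real)^2"
proof -
  have "0 \<le> (u-v)^2" by simp
  then show ?thesis by (simp add: power2_eq_square algebra_simps)
qed

lemma l2_lin: assumes "x \<in> l2" "y \<in> l2" shows "(\<lambda>j. x j + c * y j) \<in> l2"
proof -
  have S: "summable (\<lambda>j. 2 * (cmod (x j))\<^sup>2 + 2 * (cmod c)\<^sup>2 * (cmod (y j))\<^sup>2)"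
    using assms unfolding l2_def by (intro summable_add summable_mult) auto
  have N: "norm ((cmod (x j + c * y j))\<^sup>2) \<le> 2 * (cmod (x j))\<^sup>2 + 2 * (cmod c)\<^sup>2 * (cmod (y j))\<^sup>2" for j
  proof -
    have "cmod (x j + c * y j) \<le> cmod (x j) + cmod c * cmod (y j)"
      by (metis norm_mult norm_triangle_ineq)
    then have "(cmod (x j + c * y j))\<^sup>2 \<le> (cmod (x j) + cmod c * cmod (y j))\<^sup>2"
      by (simp add: power_mono)
    also have "\<dots> \<le> 2 * (cmod (x j))\<^sup>2 + 2 * (cmod c)\<^sup>2 * (cmod (y j))\<^sup>2"
      using sq_ineq[of "cmod (x j)" "cmod c * cmod (y j)"] by (simp add: power_mult_distrib)
    finally show ?thesis by simp
  qed
  have "summable (\<lambda>j. (cmod (x j + c * y j))\<^sup>2)"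
    by (rule summable_comparison_test'[OF S, of 0]) (use N in auto)
  then show ?thesis unfolding l2_def by simp
qed




lemma alg:
  fixes r0 r1 r2 :: real
  assumes "r0 > 0" "r1 > 0" "r2 > 0"
    and e1: "1 - 2 * r0^2 + r0^2 * r1^2 = 0"
    and e2: "1 - 2 * r1^2 + r1^2 * r2^2 = 0"
    and e3: "1 - 2 * (r0 * r1) + (r0 * r1) * (r1 * r2) = 0"
  shows "r0 = 1"
proof -
  define p where "p = r0 * r1"
  have pp: "p^2 = r0^2 * r1^2" by (simp add: p_def power_mult_distrib)
  have h1: "2 * r0^2 = p^2 + 1" using e1 pp by linarith
  have h3: "p * (r1 * r2) = 2 * p - 1" using e3 unfolding p_def by linarith
  have s: "r1^2 * r2^2 = 2 * r1^2 - 1" using e2 by linarith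
  have "(2*p - 1)^2 = (p * (r1*r2))^2" using h3 by simp
  also have "\<dots> = p^2 * (r1^2 * r2^2)" by (simp add: power_mult_distrib)
  also have "\<dots> = p^2 * (2*r1^2 - 1)" using s by simp
  also have "\<dots> = 2 * (p^2 * r1^2) - p^2" by (simp add: right_diff_distrib)
  finally have h2: "2 * (p^2 * r1^2) = (2*p-1)^2 + p^2" by linarith
  have "(p^2+1)*((2*p-1)^2+p^2) = (2 * r0^2) * (2 * (p^2 * r1^2))" using h1 h2 by simp
  also have "\<dots> = 4 * p^2 * (r0^2 * r1^2)" by simp
  also have "\<dots> = 4 * p^2 * p^2" using pp by simp
  finally have E: "(p^2+1)*((2*p-1)^2+p^2) = 4 * p^2 * p^2" .
  have "(p - 1)^4 = (p^2+1)*((2*p-1)^2+p^2) - 4 * p^2 * p^2" by algebra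
  then have "(p - 1)^4 = 0" using E by simp
  then have "p = 1" by simp
  then have "r0^2 = 1" using h1 by simp
  then show ?thesis using assms(1) by (simp add: power2_eq_1_iff)
qed

lemma sv_mult: "(\<lambda>k. c * sv d m k) = sv (c * d) m"
  by (auto simp: sv_def)

lemma eigen:
  assumes "bounded_op A" "\<forall>y\<in>l2. W y = (\<lambda>k. \<beta> k * y k)" "inj \<beta>"
    "A (W (sv 1 j)) = W (A (sv 1 j))"
  shows "A (sv 1 j) = sv (A (sv 1 j) j) j"
proof -
  define f where "f = A (sv 1 j)"
  have fl: "f \<in> l2" unfolding f_def by (rule bop_l2[OF assms(1) sv_l2])
  have "W (sv 1 j) = (\<lambda>k. \<beta> k * sv 1 j k)" using assms(2) sv_l2 by blast
  also have "\<dots> = (\<lambda>k. \<beta> j * sv 1 j k)" by (auto simp: sv_def)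
  finally have 1: "W (sv 1 j) = (\<lambda>k. \<beta> j * sv 1 j k)" .
  have 2: "A (\<lambda>k. \<beta> j * sv 1 j k) = (\<lambda>k. \<beta> j * f k)" unfolding f_def by (rule bop_scale[OF assms(1) sv_l2])
  have 3: "W f = (\<lambda>k. \<beta> k * f k)" using assms(2) fl by blast
  have 4: "(\<lambda>k. \<beta> j * f k) = (\<lambda>k. \<beta> k * f k)" using assms(4) 1 2 3 unfolding f_def by simp
  have "f k = 0" if "k \<noteq> j" for k
  proof -
    have "\<beta> j \<noteq> \<beta> k" using assms(3) that unfolding inj_def by blast
    moreover have "\<beta> j * f k = \<beta> k * f k" using fun_cong[OF 4, of k] by simp
    ultimately show ?thesis by simp
  qed
  then show ?thesis unfolding f_def[symmetric] by (auto simp: sv_def)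
qed

lemma eigen_pos:
  assumes "positive_op A" "\<forall>y\<in>l2. W y = (\<lambda>k. \<beta> k * y k)" "inj \<beta>"
    "A (W (sv 1 j)) = W (A (sv 1 j))" "A (A (sv 1 j)) = sv (complex_of_real r) j" "r \<ge> 0"
  shows "A (sv 1 j) = sv (complex_of_real (sqrt r)) j"
proof -
  have bo: "bounded_op A" using assms(1) by (simp add: positive_op_def)
  define d where "d = A (sv 1 j) j"
  have e: "A (sv 1 j) = sv d j" unfolding d_def by (rule eigen[OF bo assms(2-4)])
  have "l2_inner (A (sv 1 j)) (sv 1 j) \<in> \<real> \<and> 0 \<le> Re (l2_inner (A (sv 1 j)) (sv 1 j))"
    using assms(1) sv_l2 unfolding positive_op_def by blast
  moreover have "l2_inner (A (sv 1 j)) (sv 1 j) = d" unfolding sv_inner d_def by simp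
  ultimately have dr: "d \<in> \<real>" "0 \<le> Re d" by auto
  have "A (sv d j) = (\<lambda>k. d * A (sv 1 j) k)" by (rule bop_sv[OF bo])
  also have "\<dots> = sv (d * d) j" unfolding e by (rule sv_mult)
  finally have "sv (d * d) j = sv (complex_of_real r) j" using assms(5) e by simp
  then have "sv (d * d) j j = sv (complex_of_real r) j j" by simp
  then have "d * d = complex_of_real r" by (simp add: sv_def)
  moreover obtain t where t: "d = complex_of_real t" using dr(1) by (auto elim: Reals_cases)
  ultimately have "complex_of_real (t * t) = complex_of_real r" by simp
  then have tt: "t * t = r" using of_real_eq_iff by blast
  have "t \<ge> 0" using dr(2) t by simp
  then have "t = sqrt r" using tt real_sqrt_unique[of t r] by (simp add: power2_eq_square)
  then show ?thesis using e t by simp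
qed




lemma pos_fix:
  assumes "positive_op A" "y \<in> l2" "A (A y) = y"
  shows "A y = y"
proof -
  have bo: "bounded_op A" using assms(1) by (simp add: positive_op_def)
  have Ay: "A y \<in> l2" using bop_l2[OF bo assms(2)] .
  define z where "z = (\<lambda>j. A y j + (-1) * y j)"
  have zl: "z \<in> l2" unfolding z_def by (rule l2_lin[OF Ay assms(2)])
  have "A z = (\<lambda>j. A (A y) j + (-1) * A y j)" unfolding z_def by (rule bop_lin[OF bo Ay assms(2)])
  then have Az: "A z = (\<lambda>j. - z j)" using assms(3) by (auto simp: z_def)
  have "0 \<le> Re (l2_inner (A z) z)" using assms(1) zl by (simp add: positive_op_def)
  have S: "summable (\<lambda>j. (cmod (z j))\<^sup>2)" using zl by (simp add: l2_def)
  have "(\<lambda>j. complex_of_real (- (cmod (z j))\<^sup>2)) sums complex_of_real (- (\<Sum>j. (cmod (z j))\<^sup>2))"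
    using sums_of_real[OF sums_minus[OF summable_sums[OF S]]] by simp
  moreover have "(\<lambda>j. A z j * cnj (z j)) = (\<lambda>j. complex_of_real (- (cmod (z j))\<^sup>2))"
    using Az by (auto simp: complex_norm_square[symmetric])
  ultimately have "l2_inner (A z) z = complex_of_real (- (\<Sum>j. (cmod (z j))\<^sup>2))"
    unfolding l2_inner_def by (simp add: sums_iff)
  with \<open>0 \<le> Re (l2_inner (A z) z)\<close> have "(\<Sum>j. (cmod (z j))\<^sup>2) \<le> 0" by simp
  moreover have "0 \<le> (\<Sum>j. (cmod (z j))\<^sup>2)" using S by (simp add: suminf_nonneg)
  ultimately have "(\<Sum>j. (cmod (z j))\<^sup>2) = 0" by simp
  then have "\<forall>j. (cmod (z j))\<^sup>2 = 0" using suminf_eq_zero_iff[OF S] by simp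
  then show ?thesis by (auto simp: z_def fun_eq_iff)
qed

lemma shift_iso:
  assumes "\<And>j. cmod (a j) = 1" "x \<in> l2"
  shows "l2_norm (wshift a x) = l2_norm x"
proof -
  define f where "f = (\<lambda>j. (cmod (wshift a x j))\<^sup>2)"
  have fs: "(\<lambda>n. f (Suc n)) = (\<lambda>n. (cmod (x n))\<^sup>2)" using assms(1)
    by (auto simp: f_def wshift_def norm_mult)
  have S: "summable f" using assms(2) fs summable_Suc_iff[of f] by (simp add: l2_def)
  have "suminf f = (\<Sum>n. (cmod (x n))\<^sup>2)" using suminf_split_head[OF S] fs
    by (simp add: f_def wshift_def)
  then show ?thesis by (simp add: l2_norm_def f_def)
qed




theorem mainTheorem13:
  fixes a :: "nat \<Rightarrow> complex"
    and V P Q :: "(nat \<Rightarrow> complex) \<Rightarrow> (nat \<Rightarrow> complex)"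
  assumes "bounded (range a)"
    and "is_polar (wshift a) V P"
    and "is_pos_sqrt P Q"
    and "two_isometry (wshift a)"
    and "two_isometry (\<lambda>x. Q (V (Q x)))"
  shows "isometry_op (wshift a)
    \<and> (\<forall>x\<in>l2. wshift a x = Q (V (Q x)))
    \<and> (\<forall>x\<in>l2. wshift a x = (\<lambda>j. (P (V x) j + V (P x) j) / 2))"
proof -
  have md: "\<forall>x\<in>l2. \<forall>y\<in>l2. l2_inner (P (P x)) y = l2_inner (wshift a x) (wshift a y)"
    and posP: "positive_op P" and boV: "bounded_op V"
    and dec: "\<forall>x\<in>l2. wshift a x = V (P x)"
    using assms(2) by (auto simp: is_polar_def is_modulus_def partial_isometry_def)
  have boP: "bounded_op P" using posP by (simp add: positive_op_def)
  have posQ: "positive_op Q" and QQ: "\<forall>x\<in>l2. Q (Q x) = P x"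
    using assms(3) by (auto simp: is_pos_sqrt_def)
  have boQ: "bounded_op Q" using posQ by (simp add: positive_op_def)
  define b where "b k = (cmod (a k))\<^sup>2" for k
  have PP: "\<forall>y\<in>l2. P (P y) = (\<lambda>k. complex_of_real (b k) * y k)"
  proof (intro ballI ext)
    fix y k assume y: "y \<in> l2"
    have "P (P y) k = l2_inner (P (P y)) (sv 1 k)" by (simp add: sv_inner)
    also have "\<dots> = l2_inner (wshift a y) (wshift a (sv 1 k))" using md y sv_l2 by blast
    also have "\<dots> = wshift a y (Suc k) * cnj (a k)" by (simp add: sv_shift sv_inner)
    also have "\<dots> = (a k * cnj (a k)) * y k" by (simp add: wshift_def)
    also have "\<dots> = complex_of_real (b k) * y k" by (simp only: b_def complex_norm_square)
    finally show "P (P y) k = complex_of_real (b k) * y k" .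
  qed
  have rec: "1 - 2 * b j + b j * b (Suc j) = 0" for j
  proof -
    have "(l2_norm (sv 1 j))\<^sup>2 - 2 * (l2_norm (wshift a (sv 1 j)))\<^sup>2
        + (l2_norm (wshift a (wshift a (sv 1 j))))\<^sup>2 = 0"
      using assms(4) sv_l2 by (simp add: two_isometry_def)
    then show ?thesis by (simp add: sv_shift sv_norm b_def norm_mult power_mult_distrib mult.commute)
  qed
  have bpos: "b j > 0" for j
  proof -
    have "b j \<ge> 0" by (simp add: b_def)
    moreover have "b j \<noteq> 0" using rec[of j] by auto
    ultimately show ?thesis by simp
  qed
  have rpos: "cmod (a j) > 0" for j using bpos[of j] by (auto simp: b_def)
  have b0: "b 0 = 1"
  proof (rule ccontr)
    assume H: "b 0 \<noteq> 1"
    have ne1: "b j \<noteq> 1" for j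
    proof (induction j)
      case 0 then show ?case using H by simp
    next
      case (Suc j) then show ?case using rec[of j] by auto
    qed
    have decr: "b (Suc j) < b j" for j
    proof -
      have "b j * b j - b j * b (Suc j) = (b j - 1)^2" using rec[of j] by (simp add: power2_eq_square algebra_simps)
      moreover have "(b j - 1)^2 > 0" using ne1[of j] by simp
      ultimately have "b j * b (Suc j) < b j * b j" by linarith
      then show ?thesis using bpos[of j] by simp
    qed
    have injb: "inj (\<lambda>k. complex_of_real (b k))"
    proof (rule injI)
      fix m n assume "complex_of_real (b m) = complex_of_real (b n)"
      then have e: "b m = b n" by simp
      show "m = n"
      proof (rule ccontr)
        assume "m \<noteq> n"
        then consider "m < n" | "n < m" by linarith
        then show False
        proof cases
          case 1 then show False using e lift_Suc_mono_less[of "\<lambda>k. - b k", OF _ 1] decr by force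
        next
          case 2 then show False using e lift_Suc_mono_less[of "\<lambda>k. - b k", OF _ 2] decr by force
        qed
      qed
    qed
    have Pe: "P (sv 1 j) = sv (complex_of_real (cmod (a j))) j" for j
    proof -
      have "P (sv 1 j) = sv (complex_of_real (sqrt (b j))) j"
      proof (rule eigen_pos[OF posP _ injb, where W = "\<lambda>y. P (P y)"])
        show "\<forall>y\<in>l2. P (P y) = (\<lambda>k. complex_of_real (b k) * y k)" by (rule PP)
        show "P (P (P (sv 1 j))) = P (P (P (sv 1 j)))" by simp
        show "P (P (sv 1 j)) = sv (complex_of_real (b j)) j" using PP sv_l2 by (auto simp: sv_def)
        show "0 \<le> b j" using bpos[of j] by simp
      qed
      then show ?thesis by (simp add: b_def)
    qed
    have Q4: "\<forall>y\<in>l2. Q (Q (Q (Q y))) = (\<lambda>k. complex_of_real (b k) * y k)"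
    proof
      fix y assume y: "y \<in> l2"
      have "Q (Q (Q (Q y))) = Q (Q (P y))" using QQ y by simp
      also have "\<dots> = P (P y)" using QQ bop_l2[OF boP y] by simp
      finally show "Q (Q (Q (Q y))) = (\<lambda>k. complex_of_real (b k) * y k)" using PP y by simp
    qed
    have Qe: "Q (sv 1 j) = sv (complex_of_real (sqrt (cmod (a j)))) j" for j
    proof (rule eigen_pos[OF posQ Q4 injb])
      show "Q (Q (Q (Q (Q (sv 1 j))))) = Q (Q (Q (Q (Q (sv 1 j)))))" by simp
      show "Q (Q (sv 1 j)) = sv (complex_of_real (cmod (a j))) j" using QQ sv_l2 Pe by simp
    qed simp
    have Ve: "V (sv 1 j) = sv (a j / complex_of_real (cmod (a j))) (Suc j)" for j
    proof -
      have "sv (a j) (Suc j) = wshift a (sv 1 j)" by (simp add: sv_shift)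
      also have "\<dots> = V (sv (complex_of_real (cmod (a j))) j)" using dec sv_l2 Pe by simp
      also have "\<dots> = (\<lambda>k. complex_of_real (cmod (a j)) * V (sv 1 j) k)" by (rule bop_sv[OF boV])
      finally have "\<And>k. V (sv 1 j) k = sv (a j) (Suc j) k / complex_of_real (cmod (a j))"
        using rpos[of j] by (simp add: fun_eq_iff field_simps)
      then show ?thesis by (auto simp: sv_def)
    qed
    define u where "u j = complex_of_real (sqrt (cmod (a j))) * (a j / complex_of_real (cmod (a j)))
       * complex_of_real (sqrt (cmod (a (Suc j))))" for j
    have De: "Q (V (Q (sv c j))) = sv (c * u j) (Suc j)" for c j
    proof -
      define s0 where "s0 = complex_of_real (sqrt (cmod (a j)))"
      define w where "w = a j / complex_of_real (cmod (a j))"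
      define s1 where "s1 = complex_of_real (sqrt (cmod (a (Suc j))))"
      have "Q (sv c j) = (\<lambda>k. c * Q (sv 1 j) k)" by (rule bop_sv[OF boQ])
      also have "\<dots> = sv (c * s0) j" unfolding Qe s0_def by (rule sv_mult)
      finally have 1: "Q (sv c j) = sv (c * s0) j" .
      have "V (sv (c * s0) j) = (\<lambda>k. (c * s0) * V (sv 1 j) k)" by (rule bop_sv[OF boV])
      also have "\<dots> = sv (c * s0 * w) (Suc j)" unfolding Ve w_def by (rule sv_mult)
      finally have 2: "V (sv (c * s0) j) = sv (c * s0 * w) (Suc j)" .
      have "Q (sv (c * s0 * w) (Suc j)) = (\<lambda>k. (c * s0 * w) * Q (sv 1 (Suc j)) k)" by (rule bop_sv[OF boQ])
      also have "\<dots> = sv (c * s0 * w * s1) (Suc j)" unfolding Qe s1_def by (rule sv_mult)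
      finally have 3: "Q (sv (c * s0 * w) (Suc j)) = sv (c * s0 * w * s1) (Suc j)" .
      show ?thesis unfolding 1 2 3 by (simp add: u_def s0_def w_def s1_def mult.assoc)
    qed
    have un: "cmod (u j) = sqrt (cmod (a j)) * sqrt (cmod (a (Suc j)))" for j
      using rpos[of j] by (simp add: u_def norm_mult norm_divide)
    have "(l2_norm (sv 1 0))\<^sup>2 - 2 * (l2_norm (Q (V (Q (sv 1 0)))))\<^sup>2
        + (l2_norm (Q (V (Q (Q (V (Q (sv 1 0))))))))\<^sup>2 = 0"
      using assms(5) sv_l2 by (simp add: two_isometry_def)
    then have "1 - 2 * (cmod (u 0))^2 + (cmod (u 0) * cmod (u 1))^2 = 0"
      by (simp add: De sv_norm norm_mult)
    then have e3: "1 - 2 * (cmod (a 0) * cmod (a 1)) + (cmod (a 0) * cmod (a 1)) * (cmod (a 1) * cmod (a 2)) = 0"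
    proof -
      have u2: "(cmod (u j))^2 = cmod (a j) * cmod (a (Suc j))" for j
        by (simp add: un power_mult_distrib)
      have "(cmod (u 0) * cmod (u 1))^2 = (cmod (a 0) * cmod (a 1)) * (cmod (a 1) * cmod (a 2))"
        by (simp only: power_mult_distrib u2) (simp add: numeral_2_eq_2)
      then show ?thesis using \<open>1 - 2 * (cmod (u 0))^2 + (cmod (u 0) * cmod (u 1))^2 = 0\<close> u2[of 0] by simp
    qed
    have "cmod (a 0) = 1"
      by (rule alg[OF rpos rpos rpos _ _ e3]) (use rec[of 0] rec[of 1] in \<open>simp_all add: b_def numeral_2_eq_2\<close>)
    then show False using H by (simp add: b_def)
  qed
  have ball: "b j = 1" for j
  proof (induction j)
    case 0 then show ?case using b0 by simp
  next
    case (Suc j) then show ?case using rec[of j] by simp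
  qed
  have a1: "cmod (a j) = 1" for j using real_sqrt_unique[of "cmod (a j)" 1] ball[of j] by (simp add: b_def)
  have iso: "isometry_op (wshift a)" using shift_iso[OF a1] by (simp add: isometry_op_def)
  have Pid: "P y = y" if "y \<in> l2" for y
    using pos_fix[OF posP that] PP that ball by simp
  have Qid: "Q y = y" if "y \<in> l2" for y
    using pos_fix[OF posQ that] QQ that Pid by simp
  have TV: "wshift a x = V x" if "x \<in> l2" for x using dec that Pid by simp
  have Vl: "V x \<in> l2" if "x \<in> l2" for x using bop_l2[OF boV that] .
  show ?thesis
  proof (intro conjI ballI iso)
    fix x assume x: "x \<in> l2"
    show "wshift a x = Q (V (Q x))" using Qid[OF x] Qid[OF Vl[OF x]] TV[OF x] by simp
    show "wshift a x = (\<lambda>j. (P (V x) j + V (P x) j) / 2)" using Pid[OF x] Pid[OF Vl[OF x]] TV[OF x] by simp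
  qed
qed


end
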